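(* Let $\mathcal{G}$ be the complete digraph on $n\ge 3$ nodes (all ordered pairs including self-loops are edges) and let $\tau\in\{1,\dots,n-1\}$. Let $\mathbb{V}=\max_P\min_{i,j}\mathbb{P}(T_{ij}(P)\le\tau)$, the maximum over all row-stochastic nonnegative $P\in\mathbb{R}^{n\times n}$. Then the random walk strategy $P=\frac1n\mathbb{1}_n\mathbb{1}_n^\top$ satisfies $$\min_{i,j}\mathbb{P}(T_{ij}(P)\le\tau)\ \ge\ \frac{n^\tau-(n-1)^\tau}{\tau n^{\tau-1}}\,\mathbb{V},\qquad\text{and}\qquad \frac{n^\tau-(n-1)^\tau}{\tau n^{\tau-1}}\ge 1-\frac1e,$$ where $e$ is Euler's number.
   Context: For a Markov chain $(X_k)_{k\ge0}$ with transition matrix $P$, $T_{ij}=\min\{k\ge1: X_k=j\}$ given $X_0=i$. "Performance within a factor $f$ of optimality" means the strategy's value is at least $f$ times the optimal value $\mathbb{V}$. *)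

theory Defs
  imports Complex_Main "HOL-Library.FuncSet"
begin

definition row_stochastic :: "nat \<Rightarrow> (nat \<Rightarrow> nat \<Rightarrow> real) \<Rightarrow> bool" where
  "row_stochastic n P \<longleftrightarrow>
     (\<forall>a<n. \<forall>b<n. 0 \<le> P a b) \<and> (\<forall>a<n. (\<Sum>b<n. P a b) = 1)"

text \<open>Probability P(T_ij <= tau) for the chain with transition matrix P started at i:
  sum over all trajectories X_1..X_tau (with X_0 = i) that visit j at some time k in 1..tau
  of the product of transition probabilities.\<close>
definition hit_prob :: "nat \<Rightarrow> (nat \<Rightarrow> nat \<Rightarrow> real) \<Rightarrow> nat \<Rightarrow> nat \<Rightarrow> nat \<Rightarrow> real" where
  "hit_prob n P \<tau> i j =
     (\<Sum>x \<in> {x \<in> Pi\<^sub>E {1..\<tau>} (\<lambda>_. {..<n}). \<exists>k\<in>{1..\<tau>}. x k = j}.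
        \<Prod>k\<in>{1..\<tau>}. P ((x(0 := i)) (k - 1)) ((x(0 := i)) k))"

definition perf :: "nat \<Rightarrow> (nat \<Rightarrow> nat \<Rightarrow> real) \<Rightarrow> nat \<Rightarrow> real" where
  "perf n P \<tau> = Min {hit_prob n P \<tau> i j | i j. i < n \<and> j < n}"

text \<open>Optimal value V (the maximum is attained; we write it as a supremum).\<close>
definition opt_val :: "nat \<Rightarrow> nat \<Rightarrow> real" where
  "opt_val n \<tau> = Sup {perf n P \<tau> | P. row_stochastic n P}"

end

theory Submission
  imports Defs "HOL-Analysis.Convex"
begin

lemma W_sum:
  fixes t :: nat
  assumes rs: "row_stochastic n P" and i: "i < n"
  shows "(\<Sum>x\<in>Pi\<^sub>E {1..t} (\<lambda>_. {..<n}). \<Prod>k\<in>{1..t}. P ((x(0:=i)) (k-1)) ((x(0:=i)) k)) = 1"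
proof (induction t)
  case 0
  then show ?case by simp
next
  case (Suc t)
  let ?B = "\<lambda>_::nat. {..<n}"
  let ?W = "\<lambda>t x. \<Prod>k\<in>{1..t}. P ((x(0:=i)) (k-1)) ((x(0:=i)) k)"
  have ins: "{1..Suc t} = insert (Suc t) {1..t}" by auto
  have eq: "Pi\<^sub>E {1..Suc t} ?B = (\<lambda>(y, g). g(Suc t := y)) ` (?B (Suc t) \<times> Pi\<^sub>E {1..t} ?B)"
    unfolding ins by (rule PiE_insert_eq)
  have inj: "inj_on (\<lambda>(y, g). g(Suc t := y)) (?B (Suc t) \<times> Pi\<^sub>E {1..t} ?B)"
    by (rule inj_combinator) auto
  have step: "?W (Suc t) (g(Suc t := y)) = ?W t g * P ((g(0:=i)) t) y" if "g \<in> Pi\<^sub>E {1..t} ?B" for g y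
  proof -
    have "?W (Suc t) (g(Suc t := y)) = P (((g(Suc t := y))(0:=i)) t) (((g(Suc t := y))(0:=i)) (Suc t)) * ?W t (g(Suc t := y))"
      unfolding ins by (subst prod.insert) auto
    also have "?W t (g(Suc t := y)) = ?W t g"
      by (rule prod.cong) auto
    also have "((g(Suc t := y))(0:=i)) t = (g(0:=i)) t" by simp
    also have "((g(Suc t := y))(0:=i)) (Suc t) = y" by simp
    finally show ?thesis by (simp only: mult.commute)
  qed
  have rowsum: "(\<Sum>y<n. P ((g(0:=i)) t) y) = 1" if "g \<in> Pi\<^sub>E {1..t} ?B" for g
  proof -
    have "(g(0:=i)) t < n"
    proof (cases "t = 0")
      case True then show ?thesis using i by simp
    next
      case False then show ?thesis using that by (auto simp: PiE_def Pi_def)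
    qed
    then show ?thesis using rs unfolding row_stochastic_def by blast
  qed
  have "(\<Sum>x\<in>Pi\<^sub>E {1..Suc t} ?B. ?W (Suc t) x) = (\<Sum>(y,g)\<in>?B (Suc t) \<times> Pi\<^sub>E {1..t} ?B. ?W (Suc t) (g(Suc t := y)))"
    unfolding eq by (subst sum.reindex[OF inj]) (simp add: case_prod_unfold)
  also have "\<dots> = (\<Sum>y<n. \<Sum>g\<in>Pi\<^sub>E {1..t} ?B. ?W t g * P ((g(0:=i)) t) y)"
    by (subst sum.cartesian_product[symmetric], rule sum.cong, simp, rule sum.cong, simp, rule step, simp)
  also have "\<dots> = (\<Sum>g\<in>Pi\<^sub>E {1..t} ?B. ?W t g * (\<Sum>y<n. P ((g(0:=i)) t) y))"
    by (subst sum.swap) (simp add: sum_distrib_left)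
  also have "\<dots> = (\<Sum>g\<in>Pi\<^sub>E {1..t} ?B. ?W t g)"
    by (rule sum.cong, simp, subst rowsum, assumption, simp)
  finally show ?case using Suc by simp
qed

lemma W_nonneg:
  fixes t :: nat
  assumes rs: "row_stochastic n P" and i: "i < n" and x: "x \<in> Pi\<^sub>E {1..t} (\<lambda>_. {..<n})"
  shows "0 \<le> (\<Prod>k\<in>{1..t}. P ((x(0:=i)) (k-1)) ((x(0:=i)) k))"
proof (rule prod_nonneg)
  fix k assume k: "k \<in> {1..t}"
  have a: "(x(0:=i)) (k-1) < n"
  proof (cases "k - 1 = 0")
    case True then show ?thesis using i by simp
  next
    case False then have "k - 1 \<in> {1..t}" using k by auto
    then show ?thesis using x False by (auto simp: PiE_def Pi_def)
  qed
  have b: "(x(0:=i)) k < n" using k x by (auto simp: PiE_def Pi_def)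
  show "0 \<le> P ((x(0:=i)) (k-1)) ((x(0:=i)) k)"
    using rs a b unfolding row_stochastic_def by blast
qed

lemma sum_hit:
  fixes t :: nat
  assumes rs: "row_stochastic n P" and i: "i < n"
  shows "(\<Sum>j<n. hit_prob n P t i j) \<le> real t"
proof -
  let ?PI = "Pi\<^sub>E {1..t} (\<lambda>_::nat. {..<n})"
  let ?W = "\<lambda>x. \<Prod>k\<in>{1..t}. P ((x(0:=i)) (k-1)) ((x(0:=i)) k)"
  have fin: "finite ?PI" by (rule finite_PiE) auto
  have "(\<Sum>j<n. hit_prob n P t i j) = (\<Sum>j<n. \<Sum>x\<in>?PI. if (\<exists>k\<in>{1..t}. x k = j) then ?W x else 0)"
    unfolding hit_prob_def by (rule sum.cong, simp, rule sum.inter_filter[OF fin])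
  also have "\<dots> = (\<Sum>x\<in>?PI. \<Sum>j<n. if (\<exists>k\<in>{1..t}. x k = j) then ?W x else 0)"
    by (rule sum.swap)
  also have "\<dots> \<le> (\<Sum>x\<in>?PI. real t * ?W x)"
  proof (rule sum_mono)
    fix x assume x: "x \<in> ?PI"
    have "(\<Sum>j<n. if (\<exists>k\<in>{1..t}. x k = j) then ?W x else 0) = (\<Sum>j\<in>{j\<in>{..<n}. \<exists>k\<in>{1..t}. x k = j}. ?W x)"
      by (rule sum.inter_filter[symmetric]) simp
    also have "\<dots> = real (card {j\<in>{..<n}. \<exists>k\<in>{1..t}. x k = j}) * ?W x" by simp
    also have "\<dots> \<le> real t * ?W x"
    proof (rule mult_right_mono)
      have "card {j\<in>{..<n}. \<exists>k\<in>{1..t}. x k = j} \<le> card (x ` {1..t})"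
        by (rule card_mono) auto
      also have "\<dots> \<le> card {1..t}" by (rule card_image_le) simp
      finally show "real (card {j\<in>{..<n}. \<exists>k\<in>{1..t}. x k = j}) \<le> real t" by simp
      show "0 \<le> ?W x" by (rule W_nonneg[OF rs i x])
    qed
    finally show "(\<Sum>j<n. if (\<exists>k\<in>{1..t}. x k = j) then ?W x else 0) \<le> real t * ?W x" .
  qed
  also have "\<dots> = real t * (\<Sum>x\<in>?PI. ?W x)" by (simp add: sum_distrib_left)
  also have "\<dots> = real t" using W_sum[OF rs i, of t] by simp
  finally show ?thesis .
qed

lemma perf_set_eq: "{hit_prob n P t i j | i j. i < n \<and> j < n} = (\<lambda>(i,j). hit_prob n P t i j) ` ({..<n} \<times> {..<n})"
  by auto

lemma perf_le:
  fixes t :: nat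
  assumes rs: "row_stochastic n P" and n: "0 < n"
  shows "perf n P t \<le> real t / real n"
proof -
  have fin: "finite {hit_prob n P t i j | i j. i < n \<and> j < n}" unfolding perf_set_eq by simp
  have "perf n P t \<le> hit_prob n P t 0 j" if "j < n" for j
    unfolding perf_def by (rule Min_le[OF fin]) (use that n in blast)
  then have "real (card {..<n}) * perf n P t \<le> (\<Sum>j<n. hit_prob n P t 0 j)"
    by (intro sum_bounded_below) auto
  also have "\<dots> \<le> real t" by (rule sum_hit[OF rs n])
  finally have "real n * perf n P t \<le> real t" by simp
  then show ?thesis using n by (simp add: field_simps)
qed

lemma hit_uniform:
  fixes t :: nat
  assumes j: "j < n" and n: "0 < n"
  shows "hit_prob n (\<lambda>a b. 1 / real n) t i j = (real n ^ t - (real n - 1) ^ t) / real n ^ t"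
proof -
  let ?PI = "Pi\<^sub>E {1..t} (\<lambda>_::nat. {..<n})"
  let ?S = "{x \<in> ?PI. \<exists>k\<in>{1..t}. x k = j}"
  have fin: "finite ?PI" by (rule finite_PiE) auto
  have h: "hit_prob n (\<lambda>a b. 1 / real n) t i j = real (card ?S) * (1 / real n) ^ t"
    unfolding hit_prob_def by simp
  have c1: "card ?PI = n ^ t" by (simp add: card_PiE)
  moreover have "?PI - ?S = Pi\<^sub>E {1..t} (\<lambda>_::nat. {..<n} - {j})"
    by (auto simp: PiE_def Pi_def)
  then have c2: "card (?PI - ?S) = (n - 1) ^ t" using j by (simp add: card_PiE)
  moreover have "card (?PI - ?S) = card ?PI - card ?S"
    by (rule card_Diff_subset) (use fin in auto)
  moreover have "card ?S \<le> card ?PI" by (rule card_mono[OF fin]) auto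
  ultimately have "card ?S = n ^ t - (n - 1) ^ t" by linarith
  moreover have "(n - 1) ^ t \<le> n ^ t" by (rule power_mono) auto
  ultimately have "hit_prob n (\<lambda>a b. 1 / real n) t i j = (real n ^ t - real (n - 1) ^ t) * (1 / real n) ^ t"
    using h by (simp add: of_nat_diff)
  then show ?thesis using n by (simp add: of_nat_diff power_divide field_simps)
qed

lemma perf_uniform:
  fixes t :: nat
  assumes n: "0 < n"
  shows "perf n (\<lambda>a b. 1 / real n) t = (real n ^ t - (real n - 1) ^ t) / real n ^ t"
proof -
  have "{hit_prob n (\<lambda>a b. 1 / real n) t i j | i j. i < n \<and> j < n} = {(real n ^ t - (real n - 1) ^ t) / real n ^ t}"
  proof (intro equalityI subsetI)
    fix v assume "v \<in> {hit_prob n (\<lambda>a b. 1 / real n) t i j | i j. i < n \<and> j < n}"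
    then show "v \<in> {(real n ^ t - (real n - 1) ^ t) / real n ^ t}" using hit_uniform[OF _ n] by auto
  next
    fix v assume that: "v \<in> {(real n ^ t - (real n - 1) ^ t) / real n ^ t}"
    then show "v \<in> {hit_prob n (\<lambda>a b. 1 / real n) t i j | i j. i < n \<and> j < n}"
    proof -
      have "v = hit_prob n (\<lambda>a b. 1 / real n) t 0 0" using that hit_uniform[of 0 n t 0, OF n n] by simp
      then show ?thesis using n by blast
    qed
  qed
  then show ?thesis unfolding perf_def by simp
qed

lemma uniform_rs: "0 < n \<Longrightarrow> row_stochastic n (\<lambda>a b. 1 / real n)"
  unfolding row_stochastic_def by simp

lemma opt_le:
  fixes t :: nat
  assumes n: "0 < n"
  shows "opt_val n t \<le> real t / real n"
  unfolding opt_val_def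
  by (rule cSup_least) (use uniform_rs[OF n] perf_le n in auto)

lemma exp_bound:
  fixes x :: real
  assumes "0 \<le> x" "x \<le> 1"
  shows "exp (- x) \<le> 1 - x + x * exp (-1)"
proof -
  have "exp ((1 - x) *\<^sub>R 0 + x *\<^sub>R (-1)) \<le> (1 - x) * exp 0 + x * exp (-1)"
    by (rule convex_onD[OF exp_convex]) (use assms in auto)
  then show ?thesis by simp
qed

theorem lemma2:
  fixes n \<tau> :: nat
  assumes "n \<ge> 3" and "1 \<le> \<tau>" and "\<tau> \<le> n - 1"
  shows "perf n (\<lambda>a b. 1 / real n) \<tau>
           \<ge> ((real n ^ \<tau> - (real n - 1) ^ \<tau>) / (real \<tau> * real n ^ (\<tau> - 1))) * opt_val n \<tau>
       \<and> (real n ^ \<tau> - (real n - 1) ^ \<tau>) / (real \<tau> * real n ^ (\<tau> - 1)) \<ge> 1 - 1 / exp 1"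
proof -
  let ?c = "(real n ^ \<tau> - (real n - 1) ^ \<tau>) / (real \<tau> * real n ^ (\<tau> - 1))"
  have n: "0 < n" using assms by simp
  have t: "0 < \<tau>" using assms by simp
  have pw: "real n ^ \<tau> = real n * real n ^ (\<tau> - 1)" using t by (simp add: power_eq_if)
  have le: "(real n - 1) ^ \<tau> \<le> real n ^ \<tau>" by (rule power_mono) (use n in auto)
  have c0: "0 \<le> ?c" using le by simp
  have cval: "?c * (real \<tau> / real n) = (real n ^ \<tau> - (real n - 1) ^ \<tau>) / real n ^ \<tau>"
    using n t pw by (simp add: field_simps)
  have part1: "?c * opt_val n \<tau> \<le> perf n (\<lambda>a b. 1 / real n) \<tau>"
  proof -
    have "?c * opt_val n \<tau> \<le> ?c * (real \<tau> / real n)"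
      by (rule mult_left_mono[OF opt_le[OF n] c0])
    then show ?thesis using cval perf_uniform[OF n] by simp
  qed
  define x where "x = real \<tau> / real n"
  have "real \<tau> \<le> real n" using assms by simp
  then have x0: "0 < x" "x \<le> 1" using n t unfolding x_def by (auto simp: field_simps)
  have cform: "?c = (1 - (1 - 1 / real n) ^ \<tau>) / x"
  proof -
    have "(1 - 1 / real n) ^ \<tau> = (real n - 1) ^ \<tau> / real n ^ \<tau>"
      using n by (simp add: power_divide field_simps)
    then show ?thesis using n t pw unfolding x_def by (simp add: field_simps)
  qed
  have "(1 - 1 / real n) ^ \<tau> \<le> exp (- 1 / real n) ^ \<tau>"
  proof (rule power_mono)
    show "1 - 1 / real n \<le> exp (- 1 / real n)" using exp_ge_add_one_self[of "- 1 / real n"] by simp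
    show "0 \<le> 1 - 1 / real n" using n assms by simp
  qed
  also have "\<dots> = exp (- x)" unfolding x_def by (simp add: exp_of_nat_mult[symmetric])
  also have "\<dots> \<le> 1 - x + x * exp (-1)" using exp_bound x0 by simp
  finally have "x * (1 - exp (-1)) \<le> 1 - (1 - 1 / real n) ^ \<tau>" by (simp add: algebra_simps)
  then have "1 - exp (-1) \<le> (1 - (1 - 1 / real n) ^ \<tau>) / x" using x0 by (simp add: field_simps)
  then have part2: "1 - 1 / exp 1 \<le> ?c" using cform by (simp add: exp_minus field_simps)
  show ?thesis using part1 part2 by simp
qed

end
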